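(* Let $m\ge 1$ and let $P_m(z)=\sum_{j=0}^m p_jz^j$ with $p_j=\frac{(2m-j)!}{j!(m-j)!}$. For every $\theta\in[-\pi,\pi]$, all zeros (in $z$) of the polynomial $M_m(\theta,z)=P_m(z)-e^{\mathrm{i}\theta}P_m(-z)$ are purely imaginary, i.e. lie on the imaginary axis $\{\operatorname{Re}z=0\}$.
   Context: $P_m(z)/P_m(-z)$ is the $(m,m)$-Padé approximant of $e^z$ (the stability function of the $m$-stage Gauss Runge–Kutta method). *)

theory Defs
  imports "HOL-Analysis.Analysis"
begin

definition pade_coeff :: "nat \<Rightarrow> nat \<Rightarrow> real" where
  "pade_coeff m j = fact (2*m - j) / (fact j * fact (m - j))"

definition P :: "nat \<Rightarrow> complex \<Rightarrow> complex" where
  "P m z = (\<Sum>j=0..m. complex_of_real (pade_coeff m j) * z ^ j)"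

definition M :: "nat \<Rightarrow> real \<Rightarrow> complex \<Rightarrow> complex" where
  "M m \<theta> z = P m z - exp (\<i> * complex_of_real \<theta>) * P m (- z)"

end

theory Submission
  imports Defs
begin

fun K :: "(nat \<Rightarrow> complex) \<Rightarrow> complex \<Rightarrow> nat \<Rightarrow> nat \<Rightarrow> complex" where
  "K b w i 0 = 1"
| "K b w i (Suc 0) = b i"
| "K b w i (Suc (Suc n)) = b i * K b w (Suc i) (Suc n) + w * K b w (Suc (Suc i)) n"

lemma K_end: "K b w i (Suc (Suc n)) = b (i+n+1) * K b w i (Suc n) + w * K b w i n"
proof (induction n arbitrary: i rule: less_induct)
  case (less n)
  show ?case
  proof (cases n)
    case 0 then show ?thesis by (simp add: algebra_simps)
  next
    case (Suc n1)
    show ?thesis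
    proof (cases n1)
      case 0 then show ?thesis using Suc by (simp add: algebra_simps)
    next
      case (Suc n2)
      have h1: "K b w (Suc i) (Suc (Suc (Suc n2))) = b (Suc (Suc (Suc (i+n2)))) * K b w (Suc i) (Suc (Suc n2)) + w * K b w (Suc i) (Suc n2)"
        using less[of "Suc n2" "Suc i"] \<open>n = Suc n1\<close> Suc by (simp del: K.simps)
      have h2: "K b w (Suc (Suc i)) (Suc (Suc n2)) = b (Suc (Suc (Suc (i+n2)))) * K b w (Suc (Suc i)) (Suc n2) + w * K b w (Suc (Suc i)) n2"
        using less[of n2 "Suc (Suc i)"] \<open>n = Suc n1\<close> Suc by (simp del: K.simps)
      have e0: "K b w i (Suc (Suc (Suc (Suc n2)))) = b i * K b w (Suc i) (Suc (Suc (Suc n2))) + w * K b w (Suc (Suc i)) (Suc (Suc n2))"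
        by (rule K.simps(3))
      have e1: "K b w i (Suc (Suc (Suc n2))) = b i * K b w (Suc i) (Suc (Suc n2)) + w * K b w (Suc (Suc i)) (Suc n2)"
        by (rule K.simps(3))
      have e2: "K b w i (Suc (Suc n2)) = b i * K b w (Suc i) (Suc n2) + w * K b w (Suc (Suc i)) n2"
        by (rule K.simps(3))
      have "K b w i (Suc (Suc (Suc (Suc n2)))) = b (Suc (Suc (Suc (i+n2)))) * K b w i (Suc (Suc (Suc n2))) + w * K b w i (Suc (Suc n2))"
        unfolding e0 h1 h2 e1 e2 by (simp add: algebra_simps)
      then show ?thesis using \<open>n = Suc n1\<close> Suc by (simp del: K.simps add: add.commute)
    qed
  qed
qed

definition c :: "nat \<Rightarrow> nat \<Rightarrow> real" where
  "c m j = (if j \<le> m then pade_coeff m j else 0)"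

lemma P_ext: "m \<le> N \<Longrightarrow> P m z = (\<Sum>j=0..N. complex_of_real (c m j) * z ^ j)"
  unfolding P_def
  by (rule sum.mono_neutral_cong_left) (auto simp: c_def)

lemma sum_peel2: "(\<Sum>j=0..Suc (Suc n). f j) = f 0 + f 1 + (\<Sum>k=0..n. f (k+2))"
  apply (subst sum.atLeast0_atMost_Suc_shift)
  apply (subst sum.atLeast0_atMost_Suc_shift)
  by (simp add: add.assoc)


lemma fact2: "fact (Suc (Suc m)) = (real m+2)*(real m+1)*(fact m::real)"
  by (simp add: algebra_simps)
lemma fact1: "fact (Suc m) = (real m+1)*(fact m::real)"
  by (simp add: algebra_simps)

lemma c_rec0: "c (Suc (Suc n)) 0 = 2*(2*real (n+2) - 1) * c (Suc n) 0"
proof -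
  define F :: real where "F = fact (2*n+2)"
  define G :: real where "G = fact (Suc n)"
  have i1: "2 * Suc (Suc n) - 0 = Suc (Suc (2*n+2))" "Suc (Suc n) - 0 = Suc (Suc n)"
    "2 * Suc n - 0 = 2*n+2" "Suc n - 0 = Suc n" by auto
  have p: "0 < F" "0 < G" unfolding F_def G_def by auto
  have h1: "fact (Suc (Suc (2*n+2))) = (2*real n+4)*(2*real n+3)*F" unfolding F_def by (simp add: algebra_simps)
  have h2: "fact (Suc (Suc n)) = (real n+2)*G" unfolding G_def by (simp add: algebra_simps)
  have L1: "c (Suc (Suc n)) 0 = (2*real n+4)*(2*real n+3)*F / (1 * ((real n+2)*G))"
    unfolding c_def pade_coeff_def i1 h1 h2 by simp
  have L2: "c (Suc n) 0 = F / (1 * G)"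
    unfolding c_def pade_coeff_def i1 F_def G_def by simp
  have q: "real n + 2 \<noteq> 0" "real n + 1 \<noteq> 0" "G \<noteq> 0" using p by auto
  show ?thesis unfolding L1 L2 using q
    by (simp add: frac_eq_eq) (simp add: algebra_simps)
qed

lemma c_rec1: "c (Suc (Suc n)) 1 = 2*(2*real (n+2) - 1) * c (Suc n) 1"
proof -
  define F :: real where "F = fact (2*n+1)"
  define G :: real where "G = fact n"
  have i1: "2 * Suc (Suc n) - 1 = Suc (Suc (2*n+1))" "Suc (Suc n) - 1 = Suc n"
    "2 * Suc n - 1 = 2*n+1" "Suc n - 1 = n" by auto
  have p: "0 < F" "0 < G" unfolding F_def G_def by auto
  have h1: "fact (Suc (Suc (2*n+1))) = (2*real n+3)*(2*real n+2)*F" unfolding F_def by (simp add: algebra_simps)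
  have h2: "fact (Suc n) = (real n+1)*G" unfolding G_def by (simp add: algebra_simps)
  have L1: "c (Suc (Suc n)) 1 = (2*real n+3)*(2*real n+2)*F / (1 * ((real n+1)*G))"
    unfolding c_def pade_coeff_def i1 h1 h2 by simp
  have L2: "c (Suc n) 1 = F / (1 * G)"
    unfolding c_def pade_coeff_def i1 F_def G_def by simp
  have q: "real n + 2 \<noteq> 0" "real n + 1 \<noteq> 0" "G \<noteq> 0" using p by auto
  show ?thesis unfolding L1 L2 using q
    by (simp add: frac_eq_eq) (simp add: algebra_simps)
qed

lemma c_rec2: "c (Suc (Suc n)) (k+2) = 2*(2*real (n+2) - 1) * c (Suc n) (k+2) + c n k"
proof (cases "n < k")
  case True then show ?thesis by (simp add: c_def)
next
  case False
  show ?thesis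
  proof (cases "k = n")
    case True then show ?thesis by (simp add: c_def pade_coeff_def)
  next
    case False
    with \<open>\<not> n < k\<close> obtain r where n: "n = k + 1 + r" by (metis add.assoc le_Suc_ex le_neq_implies_less less_eq_Suc_le not_less Suc_eq_plus1)
    define F :: real where "F = fact (k+2*r+2)"
    define G :: real where "G = fact k"
    define H :: real where "H = fact r"
    have i1: "2 * Suc (Suc n) - (k + 2) = Suc (Suc (k+2*r+2))" "Suc (Suc n) - (k+2) = Suc r"
      "2 * Suc n - (k+2) = k+2*r+2" "Suc n - (k+2) = r" "2*n - k = k+2*r+2" "n - k = Suc r"
      "k + 2 \<le> Suc (Suc n)" "k + 2 \<le> Suc n" "k \<le> n"
      using n by auto
    have p: "0 < F" "0 < G" "0 < H" unfolding F_def G_def H_def by auto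
    have h1: "fact (Suc (Suc (k+2*r+2))) = (real k+2*real r+4)*(real k+2*real r+3)*F" unfolding F_def by (simp add: algebra_simps)
    have h2: "fact (k+2) = (real k+2)*(real k+1)*G" unfolding G_def by (simp add: algebra_simps)
    have h3: "fact (Suc r) = (real r+1)*H" unfolding H_def by (simp add: algebra_simps)
    have L1: "c (Suc (Suc n)) (k+2) = (real k+2*real r+4)*(real k+2*real r+3)*F / ((real k+2)*(real k+1)*G * ((real r+1)*H))"
      unfolding c_def pade_coeff_def i1 h1 h2 h3 using n by simp
    have L2: "c (Suc n) (k+2) = F / ((real k+2)*(real k+1)*G * H)"
      unfolding c_def pade_coeff_def i1 h2 F_def H_def using n by simp
    have L3: "c n k = F / (G * ((real r+1)*H))"
      unfolding c_def pade_coeff_def i1 h3 F_def G_def using n by simp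
    have q: "real k + 2 \<noteq> 0" "real k + 1 \<noteq> 0" "real r + 1 \<noteq> 0" "G \<noteq> 0" "H \<noteq> 0" using p by auto
    define D where "D = (real k+2)*(real k+1)*G * ((real r+1)*H)"
    have D: "D \<noteq> 0" unfolding D_def using q by simp
    have L2': "c (Suc n) (k+2) = (real r + 1) * F / D" unfolding L2 D_def using q by simp
    have L3': "c n k = (real k+2)*(real k+1) * F / D" unfolding L3 D_def using q by simp
    have L1': "c (Suc (Suc n)) (k+2) = (real k+2*real r+4)*(real k+2*real r+3)*F / D" unfolding L1 D_def by simp
    have e: "(real k+2*real r+4)*(real k+2*real r+3)*F = 2*(2*real (n+2) - 1) * ((real r + 1) * F) + (real k+2)*(real k+1) * F"
      using n by (simp add: algebra_simps)
    show ?thesis unfolding L1' L2' L3' e using D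
      by (simp add: add_divide_distrib)
  qed
qed


lemma P_rec: "P (Suc (Suc n)) z = complex_of_real (2*(2*real (n+2) - 1)) * P (Suc n) z + z^2 * P n z"
proof -
  define \<beta> where "\<beta> = 2*(2*real (n+2) - 1)"
  have A: "P (Suc (Suc n)) z = of_real (c (Suc (Suc n)) 0) + of_real (c (Suc (Suc n)) 1) * z
      + (\<Sum>k=0..n. of_real (c (Suc (Suc n)) (k+2)) * z^(k+2))"
    by (subst P_ext[of _ "Suc (Suc n)"]) (simp_all only: sum_peel2 order_refl, simp)
  have B0: "P (Suc n) z = (\<Sum>j=0..Suc (Suc n). of_real (c (Suc n) j) * z^j)"
    by (rule P_ext) simp
  have B: "P (Suc n) z = of_real (c (Suc n) 0) + of_real (c (Suc n) 1) * z
      + (\<Sum>k=0..n. of_real (c (Suc n) (k+2)) * z^(k+2))"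
    unfolding B0 sum_peel2 by simp
  have C: "P n z = (\<Sum>k=0..n. of_real (c n k) * z^k)"
    by (rule P_ext) simp
  have S: "(\<Sum>k=0..n. complex_of_real (c (Suc (Suc n)) (k+2)) * z^(k+2)) =
     of_real \<beta> * (\<Sum>k=0..n. of_real (c (Suc n) (k+2)) * z^(k+2)) + z^2 * (\<Sum>k=0..n. of_real (c n k) * z^k)"
    unfolding c_rec2 \<beta>_def
    by (simp add: sum.distrib sum_distrib_left algebra_simps power_add power2_eq_square)
  show ?thesis unfolding A B C S \<beta>_def[symmetric] c_rec0 c_rec1
    by (simp add: algebra_simps \<beta>_def)
qed

definition bb :: "nat \<Rightarrow> complex" where "bb i = complex_of_real (2*(2*real i - 1))"

lemma P_K: "P (Suc m) z = K bb (z^2) 1 (Suc m) + z * K bb (z^2) 2 m"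
proof -
  have "P (Suc m) z = K bb (z^2) 1 (Suc m) + z * K bb (z^2) 2 m \<and>
        P (Suc (Suc m)) z = K bb (z^2) 1 (Suc (Suc m)) + z * K bb (z^2) 2 (Suc m)"
  proof (induction m)
    case 0
    have "P 1 z = 2 + z" by (simp add: P_def pade_coeff_def)
    moreover have "P 2 z = 12 + 6*z + z^2"
      by (simp add: P_def pade_coeff_def numeral_2_eq_2 numeral_3_eq_3 fact_numeral)
    ultimately show ?case by (simp add: bb_def numeral_2_eq_2 algebra_simps)
  next
    case (Suc m)
    have r: "P (Suc (Suc (Suc m))) z = bb (Suc (Suc (Suc m))) * P (Suc (Suc m)) z + z^2 * P (Suc m) z"
      unfolding P_rec bb_def by simp
    have k1: "K bb (z^2) 1 (Suc (Suc (Suc m))) = bb (Suc (Suc (Suc m))) * K bb (z^2) 1 (Suc (Suc m)) + z^2 * K bb (z^2) 1 (Suc m)"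
      using K_end[of bb "z^2" 1 "Suc m"] by simp
    have k2: "K bb (z^2) 2 (Suc (Suc m)) = bb (Suc (Suc (Suc m))) * K bb (z^2) 2 (Suc m) + z^2 * K bb (z^2) 2 m"
      using K_end[of bb "z^2" 2 m] by simp
    show ?case using Suc unfolding r k1 k2 by (simp add: algebra_simps)
  qed
  then show ?thesis by blast
qed

lemma K_inv:
  assumes "Re z > 0" "i \<ge> 1"
  shows "K bb (z^2) (Suc i) n \<noteq> 0 \<and> Re (z * K bb (z^2) (Suc i) n * cnj (K bb (z^2) i (Suc n))) > 0"
  using assms(2)
proof (induction n arbitrary: i)
  case 0
  have "Re (z * cnj (bb i)) = Re z * (2*(2*real i - 1))" by (simp add: bb_def)
  moreover have "2*(2*real i - 1) > 0" using 0 by simp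
  ultimately show ?case using assms(1) by simp
next
  case (Suc n)
  define X where "X = K bb (z^2) (Suc i) (Suc n)"
  define Y where "Y = K bb (z^2) (Suc (Suc i)) n"
  have IH: "Y \<noteq> 0 \<and> Re (z * Y * cnj X) > 0" using Suc.IH[of "Suc i"] Suc.prems unfolding X_def Y_def by simp
  then have X0: "X \<noteq> 0" by auto
  have KK: "K bb (z^2) i (Suc (Suc n)) = bb i * X + z^2 * Y" unfolding X_def Y_def by simp
  define \<beta> where "\<beta> = 2*(2*real i - 1)"
  have bpos: "\<beta> > 0" using Suc.prems by (simp add: \<beta>_def)
  have e: "z * X * cnj (bb i * X + z^2 * Y) = of_real \<beta> * (z * (X * cnj X)) + (z * cnj z) * cnj (z * Y * cnj X)"
    by (simp add: bb_def \<beta>_def algebra_simps power2_eq_square)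
  have "Re (z * X * cnj (bb i * X + z^2 * Y)) = \<beta> * Re z * ((Re X)^2 + (Im X)^2) + ((Re z)^2 + (Im z)^2) * Re (z * Y * cnj X)"
    unfolding e by (simp add: algebra_simps power2_eq_square)
  moreover have "(Re X)^2 + (Im X)^2 > 0" using X0 by (simp add: complex_eq_iff sum_power2_gt_zero_iff)
  moreover have "(Re z)^2 + (Im z)^2 \<ge> 0" by simp
  ultimately have "Re (z * X * cnj (bb i * X + z^2 * Y)) > 0"
    using bpos assms(1) IH by (smt (verit) mult_nonneg_nonneg mult_pos_pos)
  then show ?case using X0 unfolding KK X_def by simp
qed


lemma norm_diff_sq: "(cmod (u + v))^2 - (cmod (u - v))^2 = 4 * Re (v * cnj u)"
  by (simp only: cmod_power2) (simp add: algebra_simps power2_eq_square)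

theorem proposition2:
  fixes m :: nat and \<theta> :: real and z :: complex
  assumes "m \<ge> 1" and "-pi \<le> \<theta>" and "\<theta> \<le> pi"
    and "M m \<theta> z = 0"
  shows "Re z = 0"
proof -
  obtain m' where m: "m = Suc m'" using assms(1) by (cases m) auto
  define A where "A = K bb (z^2) 1 m"
  define B where "B = K bb (z^2) 2 m'"
  have Pz: "P m z = A + z * B" unfolding A_def B_def m by (rule P_K)
  have Pmz: "P m (-z) = A - z * B" unfolding A_def B_def m using P_K[of m' "-z"] by simp
  have "P m z = exp (\<i> * complex_of_real \<theta>) * P m (-z)" using assms(4) unfolding M_def by simp
  then have "cmod (P m z) = cmod (P m (-z))" by (simp add: norm_mult)
  then have "cmod (A + z*B) = cmod (A - z*B)" unfolding Pz Pmz .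
  then have R: "Re (z * B * cnj A) = 0" using norm_diff_sq[of A "z*B"] by simp
  show ?thesis
  proof (rule ccontr)
    assume "Re z \<noteq> 0"
    then consider "Re z > 0" | "Re (-z) > 0" by fastforce
    then show False
    proof cases
      case 1
      from K_inv[OF 1, of 1 m'] have "Re (z * B * cnj A) > 0" unfolding A_def B_def m by (simp add: numeral_2_eq_2)
      then show False using R by simp
    next
      case 2
      from K_inv[OF 2, of 1 m'] have "Re ((-z) * B * cnj A) > 0" unfolding A_def B_def m by (simp add: numeral_2_eq_2)
      then show False using R by simp
    qed
  qed
qed

end
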